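(* Let $\mathcal H$ be a real Hilbert space, let $\varepsilon\in\left]0,1/2\right[$, let $m\geq 2$ be an integer, let $x_0\in\mathcal H$, and define $$\phi\colon\left]0,1\right[^m\to\left]0,1\right[\colon(\alpha_1,\ldots,\alpha_m)\mapsto\dfrac{1}{1+\dfrac{1}{\sum_{i=1}^m\dfrac{\alpha_i}{1-\alpha_i}}}.$$ For every $i\in\{1,\ldots,m\}$ and every $n\in\mathbb N$, let $\alpha_{i,n}\in\left]0,1\right[$, let $T_{i,n}\colon\mathcal H\to\mathcal H$ be $\alpha_{i,n}$-averaged, and let $e_{i,n}\in\mathcal H$. For every $n\in\mathbb N$, let $\lambda_n\in\left]0,(1-\varepsilon)(1+\varepsilon\phi(\alpha_{1,n},\ldots,\alpha_{m,n}))/\phi(\alpha_{1,n},\ldots,\alpha_{m,n})\right]$ and set $$x_{n+1}=x_n+\lambda_n\Big(T_{1,n}\Big(T_{2,n}\big(\cdots T_{m-1,n}(T_{m,n}x_n+e_{m,n})+e_{m-1,n}\cdots\big)+e_{2,n}\Big)+e_{1,n}-x_n\Big).$$ Suppose that $S=\bigcap_{n\in\mathbb N}\mathrm{Fix}(T_{1,n}\cdots T_{m,n})\neq\varnothing$ and that $\sum_{n\in\mathbb N}\lambda_n\|e_{i,n}\|<+\infty$ for every $i\in\{1,\ldots,m\}$. For every $i\in\{1,\ldots,m\}$ and $n\in\mathbb N$, define $T_{i+,n}=T_{i+1,n}\cdots T_{m,n}$ if $i\neq m$ and $T_{m+,n}=\mathrm{Id}$. Then: (i) $\sum_{n\in\mathbb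 N}\lambda_n\big(1/\phi(\alpha_{1,n},\ldots,\alpha_{m,n})-\lambda_n\big)\|T_{1,n}\cdots T_{m,n}x_n-x_n\|^2<+\infty$. (ii) For every $x\in S$, $\max_{1\leq i\leq m}\sum_{n\in\mathbb N}\dfrac{\lambda_n(1-\alpha_{i,n})}{\alpha_{i,n}}\big\|(\mathrm{Id}-T_{i,n})T_{i+,n}x_{n}-(\mathrm{Id}-T_{i,n})T_{i+,n}x\big\|^2<+\infty$. (iii) $(x_n)_{n\in\mathbb N}$ converges weakly to a point in $S$ if and only if every weak sequential cluster point of $(x_n)_{n\in\mathbb N}$ is in $S$. In this case, the convergence is strong if $\mathrm{int}\,S\neq\varnothing$. (iv) $(x_n)_{n\in\mathbb N}$ converges strongly to a point in $S$ if and only if $\liminf_{n\to\infty} d_S(x_n)=0$.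
   Context: An operator $T\colon\mathcal H\to\mathcal H$ is nonexpansive if it is 1-Lipschitz; for $\alpha\in\left]0,1\right[$, a nonexpansive $T$ is $\alpha$-averaged if there exists a nonexpansive $R\colon\mathcal H\to\mathcal H$ with $T=(1-\alpha)\mathrm{Id}+\alpha R$. $\mathrm{Fix}$ denotes the fixed point set, $d_S$ the distance function to $S$, $\mathrm{int}\,S$ the interior of $S$. *)

theory Defs
  imports "HOL-Analysis.Analysis"
begin

definition nonexpansive :: "('a::real_normed_vector \<Rightarrow> 'a) \<Rightarrow> bool" where
  "nonexpansive T \<longleftrightarrow> (\<forall>x y. norm (T x - T y) \<le> norm (x - y))"

definition averaged :: "real \<Rightarrow> ('a::real_normed_vector \<Rightarrow> 'a) \<Rightarrow> bool" where
  "averaged \<alpha> T \<longleftrightarrow> 0 < \<alpha> \<and> \<alpha> < 1 \<and> nonexpansive T \<and>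
     (\<exists>R. nonexpansive R \<and> T = (\<lambda>x. (1 - \<alpha>) *\<^sub>R x + \<alpha> *\<^sub>R R x))"

definition Fix :: "('a \<Rightarrow> 'a) \<Rightarrow> 'a set" where
  "Fix T = {x. T x = x}"

definition phi :: "nat \<Rightarrow> (nat \<Rightarrow> real) \<Rightarrow> real" where
  "phi m \<alpha> = 1 / (1 + 1 / (\<Sum>i=1..m. \<alpha> i / (1 - \<alpha> i)))"

text \<open>comp_range T n i j = T_{i,n} o T_{i+1,n} o ... o T_{j,n}  (identity if i > j)\<close>
definition comp_range :: "(nat \<Rightarrow> nat \<Rightarrow> 'a \<Rightarrow> 'a) \<Rightarrow> nat \<Rightarrow> nat \<Rightarrow> nat \<Rightarrow> 'a \<Rightarrow> 'a" where
  "comp_range T n i j = foldr (\<lambda>k f. T k n \<circ> f) [i..<Suc j] id"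

text \<open>perturbed composition:
  y |-> T_{i,n}( T_{i+1,n}( ... T_{j,n} y + e_{j,n} ...) + e_{i+1,n}) + e_{i,n}\<close>
definition pert_comp :: "(nat \<Rightarrow> nat \<Rightarrow> 'a \<Rightarrow> 'a::real_vector) \<Rightarrow> (nat \<Rightarrow> nat \<Rightarrow> 'a)
    \<Rightarrow> nat \<Rightarrow> nat \<Rightarrow> nat \<Rightarrow> 'a \<Rightarrow> 'a" where
  "pert_comp T e n i j = foldr (\<lambda>k g. (\<lambda>y. T k n (g y) + e k n)) [i..<Suc j] id"

definition weakly_conv :: "(nat \<Rightarrow> 'a::real_inner) \<Rightarrow> 'a \<Rightarrow> bool" where
  "weakly_conv x z \<longleftrightarrow> (\<forall>y. ((\<lambda>n. inner (x n) y) \<longlongrightarrow> inner z y) sequentially)"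

definition weak_seq_cluster :: "(nat \<Rightarrow> 'a::real_inner) \<Rightarrow> 'a \<Rightarrow> bool" where
  "weak_seq_cluster x z \<longleftrightarrow> (\<exists>r. strict_mono r \<and> weakly_conv (x \<circ> r) z)"

end

theory Submission
  imports Defs "HOL-Library.Diagonal_Subsequence"
begin

lemma qfejer_conv:
  fixes a c :: "nat \<Rightarrow> real"
  assumes a0: "\<And>n. 0 \<le> a n" and c0: "\<And>n. 0 \<le> c n" and sc: "summable c"
    and step: "\<And>n. a (Suc n) \<le> a n + c n"
  shows "convergent a"
proof -
  define b where "b n = a n - (\<Sum>k<n. c k)" for n
  have "decseq b" unfolding decseq_Suc_iff b_def using step by (simp add: algebra_simps)
  moreover have "\<forall>i. - suminf c \<le> b i"
  proof
    fix i
    have "(\<Sum>k<i. c k) \<le> suminf c" using sum_le_suminf[OF sc] c0 by auto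
    then show "- suminf c \<le> b i" using a0[of i] unfolding b_def by simp
  qed
  ultimately obtain L where L: "b \<longlonglongrightarrow> L" using decseq_convergent by blast
  have "(\<lambda>n. b n + (\<Sum>k<n. c k)) \<longlonglongrightarrow> L + suminf c"
    by (intro tendsto_add L summable_LIMSEQ sc)
  then show ?thesis unfolding b_def convergent_def by auto
qed

lemma qfejer_bound:
  fixes a c :: "nat \<Rightarrow> real"
  assumes c0: "\<And>n. 0 \<le> c n" and sc: "summable c"
    and step: "\<And>n. a (Suc n) \<le> a n + c n"
  shows "a n \<le> a 0 + suminf c"
proof -
  have "a n \<le> a 0 + (\<Sum>k<n. c k)"
    by (induction n) (auto intro: order_trans[OF step])
  also have "(\<Sum>k<n. c k) \<le> suminf c" using sum_le_suminf[OF sc] c0 by auto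
  finally show ?thesis by simp
qed

lemma qfejer_tail:
  fixes a c :: "nat \<Rightarrow> real"
  assumes c0: "\<And>n. 0 \<le> c n" and sc: "summable c"
    and step: "\<And>n. a (Suc n) \<le> a n + c n"
  shows "a (n + k) \<le> a n + (\<Sum>j. c (j + n))"
proof -
  have "a (n + k) \<le> a n + (\<Sum>j<k. c (j + n))"
    by (induction k) (auto intro: order_trans[OF step] simp: add.commute)
  also have "(\<Sum>j<k. c (j + n)) \<le> (\<Sum>j. c (j + n))"
    using sum_le_suminf[of "\<lambda>j. c (j + n)"] sc c0 summable_iff_shift[of c n] by auto
  finally show ?thesis by simp
qed

lemma telescope_summable:
  fixes a b c :: "nat \<Rightarrow> real"
  assumes a0: "\<And>n. 0 \<le> a n" and b0: "\<And>n. 0 \<le> b n" and c0: "\<And>n. 0 \<le> c n" and sc: "summable c"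
    and step: "\<And>n. a (Suc n) \<le> a n - b n + c n"
  shows "summable b"
proof (rule summableI_nonneg_bounded[OF b0])
  fix n
  have "(\<Sum>i<n. b i) \<le> a 0 - a n + (\<Sum>i<n. c i)"
    by (induction n) (auto intro: order_trans[OF step] simp: algebra_simps, smt (verit) step)
  also have "\<dots> \<le> a 0 + suminf c" using a0[of n] sum_le_suminf[OF sc, of "{..<n}"] c0 by auto
  finally show "(\<Sum>i<n. b i) \<le> a 0 + suminf c" .
qed

lemma nsq_add: "(norm (a + b :: 'a::real_inner))\<^sup>2 = (norm a)\<^sup>2 + 2 * inner a b + (norm b)\<^sup>2"
  by (simp add: power2_norm_eq_inner inner_add_left inner_add_right inner_commute)

lemma nsq_diff: "(norm (a - b :: 'a::real_inner))\<^sup>2 = (norm a)\<^sup>2 - 2 * inner a b + (norm b)\<^sup>2"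
  by (simp add: power2_norm_eq_inner inner_diff_left inner_diff_right inner_commute)

lemma nsq_scale: "(norm (t *\<^sub>R a :: 'a::real_inner))\<^sup>2 = t\<^sup>2 * (norm a)\<^sup>2"
  by (simp add: power_mult_distrib)

lemma riesz_sub:
  fixes V :: "'a::{real_inner,complete_space} set" and g :: "'a \<Rightarrow> real"
  assumes sub: "subspace V"
   and gadd: "\<And>a b. a\<in>V \<Longrightarrow> b\<in>V \<Longrightarrow> g (a+b) = g a + g b"
   and gscale: "\<And>a t. a\<in>V \<Longrightarrow> g (t *\<^sub>R a) = t * g a"
   and gbd: "\<And>a. a\<in>V \<Longrightarrow> \<bar>g a\<bar> \<le> C * norm a"
  shows "\<exists>z\<in>closure V. \<forall>v\<in>V. inner z v = g v"
proof -
  define J where "J w = (norm w)\<^sup>2/2 - g w" for w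
  have Jlow: "-(C\<^sup>2)/2 \<le> J w" if "w \<in> V" for w
  proof -
    have "g w \<le> C * norm w" using gbd[OF that] by linarith
    moreover have "0 \<le> (norm w - C)\<^sup>2" by simp
    ultimately show ?thesis unfolding J_def by (simp add: power2_eq_square algebra_simps)
  qed
  have V0: "0 \<in> V" using sub by (rule subspace_0)
  define \<mu> where "\<mu> = Inf (J ` V)"
  have bdd: "bdd_below (J ` V)" using Jlow by (intro bdd_belowI[where m="-(C\<^sup>2)/2"]) auto
  have mule: "\<mu> \<le> J w" if "w \<in> V" for w
    unfolding \<mu>_def using bdd that by (auto intro: cInf_lower)
  have "\<exists>w\<in>V. J w < \<mu> + 1/(real k+1)" for k
  proof -
    have "Inf (J ` V) < \<mu> + 1/(real k+1)" unfolding \<mu>_def by simp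
    then show ?thesis by (subst (asm) cInf_less_iff) (use bdd V0 in auto)
  qed
  then obtain w where wV: "\<And>k. w k \<in> V" and wJ: "\<And>k. J (w k) < \<mu> + 1/(real k+1)"
    by metis
  have para: "(norm (a - b))\<^sup>2 \<le> 4 * (J a + J b - 2*\<mu>)" if "a \<in> V" "b \<in> V" for a b
  proof -
    define mm where "mm = (1/2) *\<^sub>R (a + b)"
    have mV: "mm \<in> V" unfolding mm_def using sub that
      by (intro subspace_mul subspace_add) auto
    have gm: "g mm = (g a + g b)/2" unfolding mm_def using gscale gadd that sub
      by (simp add: subspace_add)
    have "(norm a)\<^sup>2 + (norm b)\<^sup>2 = 2 * (norm mm)\<^sup>2 + (norm (a - b))\<^sup>2 / 2"
      unfolding mm_def nsq_scale nsq_add nsq_diff by (simp add: power2_eq_square field_simps)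
    then have "J a + J b - 2 * J mm = (norm (a - b))\<^sup>2 / 4"
      unfolding J_def gm by (simp add: field_simps)
    then show ?thesis using mule[OF mV] by simp
  qed
  have "Cauchy w"
  proof (rule metric_CauchyI)
    fix e :: real assume e: "0 < e"
    obtain M :: nat where M: "8 / (e\<^sup>2) < real M" using reals_Archimedean2 by blast
    have "dist (w m) (w n) < e" if "m \<ge> M" "n \<ge> M" for m n
    proof -
      have "(norm (w m - w n))\<^sup>2 \<le> 4 * (1/(real m+1) + 1/(real n+1))"
        using para[OF wV wV, of m n] wJ[of m] wJ[of n] by simp
      also have "\<dots> \<le> 4 * (1/(real M+1) + 1/(real M+1))"
        using that by (intro mult_left_mono add_mono divide_left_mono) auto
      also have "\<dots> < e\<^sup>2"
      proof -
        have "8 < e\<^sup>2 * (real M + 1)" using M e by (simp add: field_simps) (smt (verit) zero_less_power)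
        then show ?thesis by (simp add: field_simps)
      qed
      finally have "(norm (w m - w n))\<^sup>2 < e\<^sup>2" .
      then show ?thesis using e by (simp add: dist_norm power_less_imp_less_base)
    qed
    then show "\<exists>M. \<forall>m\<ge>M. \<forall>n\<ge>M. dist (w m) (w n) < e" by blast
  qed
  then obtain z where wz: "w \<longlonglongrightarrow> z" using Cauchy_convergent_iff convergent_def by blast
  have zV: "z \<in> closure V" using wz wV closure_sequential by blast
  have "inner z v = g v" if vV: "v \<in> V" for v
  proof (rule ccontr)
    define D where "D = inner z v - g v"
    define N where "N = (norm v)\<^sup>2"
    define t where "t = - D / (N + 1)"
    assume "inner z v \<noteq> g v"
    then have D0: "D \<noteq> 0" unfolding D_def by simp
    have N0: "0 \<le> N" unfolding N_def by simp
    have ineq: "- 1/(real k+1) < t * (inner (w k) v - g v) + t\<^sup>2 * N / 2" for k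
    proof -
      have "w k + t *\<^sub>R v \<in> V" using sub wV vV by (intro subspace_add subspace_mul)
      then have "\<mu> \<le> J (w k + t *\<^sub>R v)" by (rule mule)
      also have "J (w k + t *\<^sub>R v) = J (w k) + t * (inner (w k) v - g v) + t\<^sup>2 * N / 2"
        unfolding J_def N_def nsq_add nsq_scale using gadd[OF wV, of "t *\<^sub>R v" k] gscale[OF vV]
          sub vV by (simp add: subspace_mul algebra_simps)
      finally show ?thesis using wJ[of k] by simp
    qed
    have l1: "(\<lambda>k. - 1/(real k+1)) \<longlonglongrightarrow> 0"
      using tendsto_minus[OF LIMSEQ_inverse_real_of_nat]
      by (simp add: divide_inverse add.commute)
    have l2: "(\<lambda>k. t * (inner (w k) v - g v) + t\<^sup>2 * N / 2) \<longlonglongrightarrow> t * D + t\<^sup>2 * N / 2"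
      unfolding D_def by (intro tendsto_intros wz)
    have "0 \<le> t * D + t\<^sup>2 * N / 2"
      using LIMSEQ_le[OF l1 l2] ineq less_imp_le by blast
    moreover have "t * D + t\<^sup>2 * N / 2 = D\<^sup>2 * (- N - 2) / (2 * (N+1)\<^sup>2)"
    proof -
      have "N + 1 > 0" using N0 by simp
      then show ?thesis unfolding t_def
        by (simp add: divide_simps power2_eq_square) (simp add: algebra_simps)
    qed
    moreover have "D\<^sup>2 * (- N - 2) / (2 * (N+1)\<^sup>2) < 0"
      using D0 N0 by (intro divide_neg_pos mult_pos_neg) auto
    ultimately show False by linarith
  qed
  then show ?thesis using zV by blast
qed

lemma weak_compact:
  fixes x :: "nat \<Rightarrow> 'a::{real_inner,complete_space}"
  assumes bd: "\<And>n. norm (x n) \<le> C"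
  shows "\<exists>r z. strict_mono r \<and> weakly_conv (x \<circ> r) z"
proof -
  have C0: "0 \<le> C" using bd[of 0] norm_ge_zero order_trans by blast
  let ?P = "\<lambda>k s. convergent (\<lambda>n. inner (x (s n)) (x k))"
  interpret nat: subseqs ?P
  proof (unfold subseqs_def, intro allI impI)
    fix k :: nat and s :: "nat \<Rightarrow> nat" assume s: "strict_mono s"
    define B where "B = C * norm (x k)"
    have "\<And>n. inner (x (s n)) (x k) \<in> {-B..B}"
    proof -
      fix n
      have "\<bar>inner (x (s n)) (x k)\<bar> \<le> norm (x (s n)) * norm (x k)" by (rule Cauchy_Schwarz_ineq2)
      also have "\<dots> \<le> B" unfolding B_def using bd by (intro mult_right_mono) auto
      finally show "inner (x (s n)) (x k) \<in> {-B..B}" by auto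
    qed
    then have "\<exists>l s'. strict_mono s' \<and> ((\<lambda>n. inner (x (s n)) (x k)) \<circ> s') \<longlonglongrightarrow> l"
      using compact_Icc compact_imp_seq_compact seq_compactE by metis
    then show "\<exists>r'. strict_mono r' \<and> convergent (\<lambda>n. inner (x ((s \<circ> r') n)) (x k))"
      by (auto simp: comp_def convergent_def)
  qed
  define d where "d = nat.diagseq"
  have subseq: "strict_mono d"
    unfolding d_def using nat.subseq_diagseq by auto
  have cnv: "?P k d" for k
  proof -
    have "?P k (d \<circ> ((+) (Suc k)))" unfolding d_def
      by (rule nat.diagseq_holds) (auto simp: comp_def dest: convergent_subseq_convergent[unfolded comp_def])
    then obtain L where "(\<lambda>n. inner (x (d (n + Suc k))) (x k)) \<longlonglongrightarrow> L"
      by (auto simp: add.commute convergent_def)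
    then have "(\<lambda>n. inner (x (d n)) (x k)) \<longlonglongrightarrow> L" by (rule LIMSEQ_offset)
    then show ?thesis by (auto simp: convergent_def)
  qed
  define y where "y = x \<circ> d"
  have ybd: "norm (y n) \<le> C" for n unfolding y_def using bd by simp
  define V where "V = span (range x)"
  have subV: "subspace V" unfolding V_def by simp
  have yV: "y n \<in> V" for n unfolding V_def y_def by (simp add: span_base)
  have "subspace {v. convergent (\<lambda>n. inner (y n) v)}"
    unfolding subspace_def
  proof (intro conjI ballI allI)
    show "0 \<in> {v. convergent (\<lambda>n. inner (y n) v)}" by (simp add: convergent_const)
  next
    fix a b assume "a \<in> {v. convergent (\<lambda>n. inner (y n) v)}" "b \<in> {v. convergent (\<lambda>n. inner (y n) v)}"
    then obtain la lb where "(\<lambda>n. inner (y n) a) \<longlonglongrightarrow> la" "(\<lambda>n. inner (y n) b) \<longlonglongrightarrow> lb"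
      by (auto simp: convergent_def)
    then have "(\<lambda>n. inner (y n) (a + b)) \<longlonglongrightarrow> la + lb"
      by (simp add: inner_add_right tendsto_add)
    then show "a + b \<in> {v. convergent (\<lambda>n. inner (y n) v)}" by (auto simp: convergent_def)
  next
    fix c :: real and a assume "a \<in> {v. convergent (\<lambda>n. inner (y n) v)}"
    then obtain la where "(\<lambda>n. inner (y n) a) \<longlonglongrightarrow> la" by (auto simp: convergent_def)
    then have "(\<lambda>n. inner (y n) (c *\<^sub>R a)) \<longlonglongrightarrow> c * la"
      by (simp add: tendsto_mult_left)
    then show "c *\<^sub>R a \<in> {v. convergent (\<lambda>n. inner (y n) v)}" by (auto simp: convergent_def)
  qed
  moreover have "range x \<subseteq> {v. convergent (\<lambda>n. inner (y n) v)}"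
    using cnv unfolding y_def by auto
  ultimately have convV: "convergent (\<lambda>n. inner (y n) v)" if "v \<in> V" for v
    using span_minimal that unfolding V_def by blast
  define g where "g v = lim (\<lambda>n. inner (y n) v)" for v
  have gl: "(\<lambda>n. inner (y n) v) \<longlonglongrightarrow> g v" if "v \<in> V" for v
    unfolding g_def using convV[OF that] convergent_LIMSEQ_iff by blast
  have "\<exists>z\<in>closure V. \<forall>v\<in>V. inner z v = g v"
  proof (rule riesz_sub[OF subV])
    fix a b assume ab: "a \<in> V" "b \<in> V"
    have "(\<lambda>n. inner (y n) (a + b)) \<longlonglongrightarrow> g a + g b"
      unfolding inner_add_right by (intro tendsto_add gl ab)
    moreover have "a + b \<in> V" using subV ab by (rule subspace_add)
    ultimately show "g (a + b) = g a + g b" using gl LIMSEQ_unique by blast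
  next
    fix a and t :: real assume a: "a \<in> V"
    have "(\<lambda>n. inner (y n) (t *\<^sub>R a)) \<longlonglongrightarrow> t * g a"
      unfolding inner_scaleR_right by (intro tendsto_mult_left gl a)
    moreover have "t *\<^sub>R a \<in> V" using subV a by (rule subspace_mul)
    ultimately show "g (t *\<^sub>R a) = t * g a" using gl LIMSEQ_unique by blast
  next
    fix a assume a: "a \<in> V"
    have "(\<lambda>n. \<bar>inner (y n) a\<bar>) \<longlonglongrightarrow> \<bar>g a\<bar>" by (intro tendsto_rabs gl a)
    moreover have "\<bar>inner (y n) a\<bar> \<le> C * norm a" for n
      using Cauchy_Schwarz_ineq2[of "y n" a] ybd[of n] by (smt (verit) mult_right_mono norm_ge_zero)
    ultimately show "\<bar>g a\<bar> \<le> C * norm a" by (intro LIMSEQ_le_const2) auto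
  qed
  then obtain z where zV: "z \<in> closure V" and zg: "\<And>v. v \<in> V \<Longrightarrow> inner z v = g v" by blast
  have limV: "(\<lambda>n. inner (y n) v) \<longlonglongrightarrow> inner z v" if "v \<in> V" for v
    using gl[OF that] zg[OF that] by simp
  have "(\<lambda>n. inner (y n) u) \<longlonglongrightarrow> inner z u" for u
  proof -
    have "\<exists>p\<in>closure V. \<forall>v\<in>V. inner p v = inner u v"
      by (rule riesz_sub[OF subV, where C="norm u"])
         (auto simp: inner_add_right Cauchy_Schwarz_ineq2)
    then obtain p where pV: "p \<in> closure V" and pu: "\<And>v. v \<in> V \<Longrightarrow> inner p v = inner u v" by blast
    have e1: "inner (y n) u = inner (y n) p" for n using pu[OF yV[of n]] by (simp add: inner_commute)
    have "closure V \<subseteq> {w. inner w (u - p) = 0}"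
      by (rule closure_minimal) (auto simp: inner_diff_right intro!: closed_Collect_eq continuous_intros, metis pu inner_commute)
    then have e2: "inner z u = inner z p" using zV by (auto simp: inner_diff_right)
    have "(\<lambda>n. inner (y n) p) \<longlonglongrightarrow> inner z p"
      unfolding LIMSEQ_iff
    proof (intro allI impI)
      fix r :: real assume r: "0 < r"
      define K where "K = C + norm z + 1"
      have K0: "0 < K" unfolding K_def using C0 by (smt (verit) norm_ge_zero)
      obtain v where vV: "v \<in> V" and dv: "dist v p < r / (2*K)"
        using pV r K0 unfolding closure_approachable by (metis divide_pos_pos mult_pos_pos zero_less_numeral)
      obtain no where no: "\<And>n. n \<ge> no \<Longrightarrow> norm (inner (y n) v - inner z v) < r/2"
        using limV[OF vV] r unfolding LIMSEQ_iff by (meson half_gt_zero)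
      have "norm (inner (y n) p - inner z p) < r" if "n \<ge> no" for n
      proof -
        have eq: "inner (y n) p - inner z p = inner (y n - z) (p - v) + (inner (y n) v - inner z v)"
          by (simp add: inner_diff_left inner_diff_right)
        have "\<bar>inner (y n - z) (p - v)\<bar> \<le> norm (y n - z) * norm (p - v)" by (rule Cauchy_Schwarz_ineq2)
        also have "\<dots> \<le> K * (r / (2*K))"
        proof (rule mult_mono)
          show "norm (y n - z) \<le> K" unfolding K_def using ybd[of n] norm_triangle_ineq4[of "y n" z] by simp
          show "norm (p - v) \<le> r / (2*K)" using dv by (simp add: dist_norm norm_minus_commute)
        qed (use K0 in auto)
        also have "\<dots> = r/2" using K0 by simp
        finally have "\<bar>inner (y n - z) (p - v)\<bar> \<le> r/2" .
        then show ?thesis using no[OF that] unfolding eq real_norm_def by linarith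
      qed
      then show "\<exists>no. \<forall>n\<ge>no. norm (inner (y n) p - inner z p) < r" by blast
    qed
    then show ?thesis unfolding e1 e2 .
  qed
  then have "weakly_conv (x \<circ> d) z" unfolding weakly_conv_def y_def by simp
  then show ?thesis using subseq by blast
qed

lemma weak_unique:
  assumes "weakly_conv x z" "strict_mono r" "weakly_conv (x \<circ> r) w"
  shows "w = z"
proof -
  have "(\<lambda>n. inner (x (r n)) (z - w)) \<longlonglongrightarrow> inner z (z - w)"
    using LIMSEQ_subseq_LIMSEQ[OF assms(1)[unfolded weakly_conv_def, rule_format, of "z-w"] assms(2)]
    by (simp add: comp_def)
  moreover have "(\<lambda>n. inner (x (r n)) (z - w)) \<longlonglongrightarrow> inner w (z - w)"
    using assms(3) unfolding weakly_conv_def by (simp add: comp_def)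
  ultimately have "inner z (z - w) = inner w (z - w)" using LIMSEQ_unique by blast
  then have "inner (z - w) (z - w) = 0" by (simp add: inner_diff_left)
  then show ?thesis by simp
qed

lemma strong_weak: "x \<longlonglongrightarrow> z \<Longrightarrow> weakly_conv x z"
  unfolding weakly_conv_def by (auto intro: tendsto_intros)

lemma opial:
  fixes x :: "nat \<Rightarrow> 'a::real_inner"
  assumes conv: "\<And>z. z \<in> S \<Longrightarrow> convergent (\<lambda>n. norm (x n - z))"
    and z1: "z1 \<in> S" "weak_seq_cluster x z1" and z2: "z2 \<in> S" "weak_seq_cluster x z2"
  shows "z1 = z2"
proof -
  obtain L1 L2 where L1: "(\<lambda>n. norm (x n - z1)) \<longlonglongrightarrow> L1" and L2: "(\<lambda>n. norm (x n - z2)) \<longlonglongrightarrow> L2"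
    using conv z1 z2 by (meson convergent_def)
  have eq: "inner (x n) (z2 - z1) = ((norm (x n - z1))\<^sup>2 - (norm (x n - z2))\<^sup>2 - (norm z1)\<^sup>2 + (norm z2)\<^sup>2) / 2" for n
  proof -
    have "(norm (x n - z1))\<^sup>2 - (norm (x n - z2))\<^sup>2 - (norm z1)\<^sup>2 + (norm z2)\<^sup>2 = 2 * inner (x n) (z2 - z1)"
      unfolding nsq_diff by (simp add: inner_diff_right inner_commute)
    then show ?thesis by simp
  qed
  define L where "L = (L1\<^sup>2 - L2\<^sup>2 - (norm z1)\<^sup>2 + (norm z2)\<^sup>2) / 2"
  have lim: "(\<lambda>n. inner (x n) (z2 - z1)) \<longlonglongrightarrow> L"
    unfolding eq L_def by (intro tendsto_intros L1 L2) auto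
  obtain r1 where r1: "strict_mono r1" "weakly_conv (x \<circ> r1) z1" using z1 weak_seq_cluster_def by blast
  obtain r2 where r2: "strict_mono r2" "weakly_conv (x \<circ> r2) z2" using z2 weak_seq_cluster_def by blast
  have "(\<lambda>n. inner (x (r1 n)) (z2 - z1)) \<longlonglongrightarrow> L" using LIMSEQ_subseq_LIMSEQ[OF lim r1(1)] by (simp add: comp_def)
  moreover have "(\<lambda>n. inner (x (r1 n)) (z2 - z1)) \<longlonglongrightarrow> inner z1 (z2 - z1)" using r1(2) unfolding weakly_conv_def by (simp add: comp_def)
  ultimately have a: "L = inner z1 (z2 - z1)" using LIMSEQ_unique by blast
  have "(\<lambda>n. inner (x (r2 n)) (z2 - z1)) \<longlonglongrightarrow> L" using LIMSEQ_subseq_LIMSEQ[OF lim r2(1)] by (simp add: comp_def)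
  moreover have "(\<lambda>n. inner (x (r2 n)) (z2 - z1)) \<longlonglongrightarrow> inner z2 (z2 - z1)" using r2(2) unfolding weakly_conv_def by (simp add: comp_def)
  ultimately have b: "L = inner z2 (z2 - z1)" using LIMSEQ_unique by blast
  have "inner (z2 - z1) (z2 - z1) = 0" using a b by (simp add: inner_diff_left)
  then show ?thesis by simp
qed

lemma fejer_conclusions:
  fixes x :: "nat \<Rightarrow> 'a::{real_inner,complete_space}" and c :: "nat \<Rightarrow> real"
  assumes c0: "\<And>n. 0 \<le> c n" and sc: "summable c"
    and fej: "\<And>z n. z \<in> S \<Longrightarrow> norm (x (Suc n) - z) \<le> norm (x n - z) + c n"
    and Sne: "S \<noteq> {}" and Scl: "closed S"
  shows "((\<exists>z\<in>S. weakly_conv x z) \<longleftrightarrow> (\<forall>z. weak_seq_cluster x z \<longrightarrow> z \<in> S))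
   \<and> ((\<exists>z\<in>S. weakly_conv x z) \<and> interior S \<noteq> {} \<longrightarrow> (\<exists>z\<in>S. x \<longlonglongrightarrow> z))
   \<and> ((\<exists>z\<in>S. x \<longlonglongrightarrow> z) \<longleftrightarrow> liminf (\<lambda>n. ereal (infdist (x n) S)) = 0)"
proof -
  obtain s0 where s0: "s0 \<in> S" using Sne by blast
  have bdz: "norm (x n - z) \<le> norm (x 0 - z) + suminf c" if "z \<in> S" for z n
    using qfejer_bound[where c=c and a="\<lambda>n. norm (x n - z)", OF c0 sc fej[OF that]] .
  have xbd: "norm (x n) \<le> norm s0 + (norm (x 0 - s0) + suminf c)" for n
    using bdz[OF s0, of n] norm_triangle_ineq2[of "x n" s0] by linarith
  have cvz: "convergent (\<lambda>n. norm (x n - z))" if "z \<in> S" for z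
    using qfejer_conv[where c=c and a="\<lambda>n. norm (x n - z)", OF _ c0 sc fej[OF that]] by simp
  show ?thesis
  proof (intro conjI)
  show "(\<exists>z\<in>S. weakly_conv x z) \<longleftrightarrow> (\<forall>z. weak_seq_cluster x z \<longrightarrow> z \<in> S)"
  proof
    assume "\<exists>z\<in>S. weakly_conv x z"
    then obtain z where z: "z \<in> S" "weakly_conv x z" by blast
    show "\<forall>z. weak_seq_cluster x z \<longrightarrow> z \<in> S"
    proof (intro allI impI)
      fix w assume "weak_seq_cluster x w"
      then obtain r where "strict_mono r" "weakly_conv (x \<circ> r) w" unfolding weak_seq_cluster_def by blast
      then have "w = z" by (rule weak_unique[OF z(2)])
      then show "w \<in> S" using z(1) by simp
    qed
  next
    assume cl: "\<forall>z. weak_seq_cluster x z \<longrightarrow> z \<in> S"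
    obtain r0 z0 where r0: "strict_mono r0" "weakly_conv (x \<circ> r0) z0"
      using weak_compact[of x, OF xbd] by blast
    have z0c: "weak_seq_cluster x z0" using r0 weak_seq_cluster_def by blast
    with cl have z0S: "z0 \<in> S" by blast
    have "weakly_conv x z0"
      unfolding weakly_conv_def
    proof (rule allI, rule ccontr)
      fix u assume nl: "\<not> (\<lambda>n. inner (x n) u) \<longlonglongrightarrow> inner z0 u"
      then obtain \<delta> where \<delta>: "\<delta> > 0" and fr: "\<forall>no. \<exists>n\<ge>no. \<not> norm (inner (x n) u - inner z0 u) < \<delta>"
        unfolding LIMSEQ_iff by blast
      have unb: "\<forall>m. \<exists>n\<ge>m. \<delta> \<le> \<bar>inner (x n) u - inner z0 u\<bar>"
        using fr by (metis not_less real_norm_def)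
      define A where "A = {n. \<delta> \<le> \<bar>inner (x n) u - inner z0 u\<bar>}"
      have "infinite A" unfolding A_def infinite_nat_iff_unbounded_le using unb by simp
      then have "\<exists>s::nat\<Rightarrow>nat. strict_mono s \<and> (\<forall>n. s n \<in> A)"
        by (rule infinite_enumerate)
      then obtain s :: "nat \<Rightarrow> nat" where s: "strict_mono s" and sS: "\<forall>n. s n \<in> A"
        by blast
      have sfar: "\<delta> \<le> \<bar>inner (x (s n)) u - inner z0 u\<bar>" for n using sS unfolding A_def by simp
      have xsb: "norm ((x \<circ> s) n) \<le> norm s0 + (norm (x 0 - s0) + suminf c)" for n using xbd by simp
      obtain r' w where r': "strict_mono r'" "weakly_conv ((x \<circ> s) \<circ> r') w"
        using weak_compact[of "x \<circ> s", OF xsb] by blast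
      have "strict_mono (s \<circ> r')" using s r'(1) by (rule strict_mono_o)
      moreover have "weakly_conv (x \<circ> (s \<circ> r')) w" using r'(2) by (simp add: comp_assoc)
      ultimately have wc: "weak_seq_cluster x w" unfolding weak_seq_cluster_def by blast
      then have wS: "w \<in> S" using cl by blast
      have wz: "w = z0" using opial[OF cvz z0S z0c wS wc] by simp
      have "(\<lambda>n. inner (x (s (r' n))) u) \<longlonglongrightarrow> inner z0 u"
        using r'(2) wz unfolding weakly_conv_def by (simp add: comp_def)
      then obtain no where no: "\<And>n. n \<ge> no \<Longrightarrow> norm (inner (x (s (r' n))) u - inner z0 u) < \<delta>"
        using \<delta> unfolding LIMSEQ_iff by blast
      have "\<bar>inner (x (s (r' no))) u - inner z0 u\<bar> < \<delta>" using no[of no] by simp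
      then show False using sfar[of "r' no"] by simp
    qed
    then show "\<exists>z\<in>S. weakly_conv x z" using z0S by blast
  qed
next
  show "(\<exists>z\<in>S. weakly_conv x z) \<and> interior S \<noteq> {} \<longrightarrow> (\<exists>z\<in>S. x \<longlonglongrightarrow> z)"
  proof (intro impI, elim conjE)
    assume "\<exists>z\<in>S. weakly_conv x z" and "interior S \<noteq> {}"
    then obtain z where zS: "z \<in> S" and wz: "weakly_conv x z" by blast
    obtain cc where "cc \<in> interior S" using \<open>interior S \<noteq> {}\<close> by blast
    then obtain \<rho> where \<rho>: "\<rho> > 0" "ball cc \<rho> \<subseteq> S" unfolding mem_interior by blast
    define \<rho>' where "\<rho>' = \<rho> / 2"
    have \<rho>': "\<rho>' > 0" "cball cc \<rho>' \<subseteq> S" using \<rho> unfolding \<rho>'_def by auto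
    define Bc where "Bc = norm (x 0 - cc) + suminf c"
    define M where "M = Bc + \<rho>'"
    define cs where "cs = suminf c"
    have ccS: "cc \<in> S" using \<rho>' by auto
    have xcb: "norm (x n - cc) \<le> Bc" for n unfolding Bc_def using bdz[OF ccS] .
    have cle: "c n \<le> cs" for n unfolding cs_def using sum_le_suminf[OF sc, of "{n}"] c0 by auto
    have "0 \<le> cs" unfolding cs_def by (rule suminf_nonneg[OF sc c0])
    moreover have "0 \<le> Bc" unfolding Bc_def using suminf_nonneg[OF sc c0] by simp
    ultimately have Mpos: "0 \<le> 2 * M + cs" unfolding M_def using \<rho>' by simp
    have stepi: "2 * \<rho>' * norm (x (Suc n) - x n) \<le> (norm (x n - cc))\<^sup>2 - (norm (x (Suc n) - cc))\<^sup>2 + c n * (2 * M + cs)" for n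
    proof (cases "x (Suc n) = x n")
      case True
      have "0 \<le> c n * (2 * M + cs)" using c0[of n] Mpos by simp
      then show ?thesis using True by simp
    next
      case False
      define \<Delta> where "\<Delta> = x (Suc n) - x n"
      have \<Delta>0: "norm \<Delta> > 0" using False unfolding \<Delta>_def by simp
      define u where "u = (1 / norm \<Delta>) *\<^sub>R \<Delta>"
      have nu: "norm u = 1" unfolding u_def using \<Delta>0 by simp
      have iu: "inner \<Delta> u = norm \<Delta>" unfolding u_def using \<Delta>0
        by (simp add: power2_norm_eq_inner[symmetric] power2_eq_square)
      define zz where "zz = cc - \<rho>' *\<^sub>R u"
      have "dist cc zz = \<rho>'" unfolding zz_def dist_norm using nu \<rho>' by simp
      then have zzS: "zz \<in> S" using \<rho>'(2) by auto
      have nzz: "norm (x n - zz) \<le> M"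
      proof -
        have "x n - zz = (x n - cc) + \<rho>' *\<^sub>R u" unfolding zz_def by simp
        then have "norm (x n - zz) \<le> norm (x n - cc) + norm (\<rho>' *\<^sub>R u)"
          by (metis norm_triangle_ineq)
        then show ?thesis using xcb[of n] nu \<rho>' unfolding M_def by simp
      qed
      have "norm (x (Suc n) - zz) \<le> norm (x n - zz) + c n" using fej[OF zzS] .
      then have "(norm (x (Suc n) - zz))\<^sup>2 \<le> (norm (x n - zz) + c n)\<^sup>2"
        by (intro power_mono) auto
      also have "\<dots> = (norm (x n - zz))\<^sup>2 + c n * (2 * norm (x n - zz) + c n)"
        by (simp add: power2_eq_square algebra_simps)
      also have "\<dots> \<le> (norm (x n - zz))\<^sup>2 + c n * (2 * M + cs)"
        using nzz cle[of n] c0[of n] by (intro add_left_mono mult_left_mono) auto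
      finally have ineq: "(norm (x (Suc n) - zz))\<^sup>2 \<le> (norm (x n - zz))\<^sup>2 + c n * (2 * M + cs)" .
      have ex: "(norm (y - zz))\<^sup>2 = (norm (y - cc))\<^sup>2 + 2 * \<rho>' * inner (y - cc) u + \<rho>'\<^sup>2" for y
      proof -
        have "y - zz = (y - cc) + \<rho>' *\<^sub>R u" unfolding zz_def by simp
        then have "(norm (y - zz))\<^sup>2 = (norm ((y - cc) + \<rho>' *\<^sub>R u))\<^sup>2" by (simp only:)
        also have "\<dots> = (norm (y - cc))\<^sup>2 + 2 * \<rho>' * inner (y - cc) u + \<rho>'\<^sup>2"
          unfolding nsq_add nsq_scale using nu by simp
        finally show ?thesis .
      qed
      have "inner (x (Suc n) - cc) u - inner (x n - cc) u = norm \<Delta>"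
        using iu unfolding \<Delta>_def by (simp add: inner_diff_left)
      then have "2 * \<rho>' * inner (x (Suc n) - cc) u - 2 * \<rho>' * inner (x n - cc) u = 2 * \<rho>' * norm \<Delta>"
        by (metis right_diff_distrib)
      then show ?thesis using ineq[unfolded ex] unfolding \<Delta>_def by linarith
    qed
    have "summable (\<lambda>n. 2 * \<rho>' * norm (x (Suc n) - x n))"
    proof (rule telescope_summable[where a="\<lambda>n. (norm (x n - cc))\<^sup>2" and c="\<lambda>n. c n * (2 * M + cs)"])
      fix n
      show "0 \<le> (norm (x n - cc))\<^sup>2" by simp
      show "0 \<le> 2 * \<rho>' * norm (x (Suc n) - x n)" using \<rho>' by simp
      show "0 \<le> c n * (2 * M + cs)" using c0[of n] Mpos by simp
      show "(norm (x (Suc n) - cc))\<^sup>2 \<le> (norm (x n - cc))\<^sup>2 - 2 * \<rho>' * norm (x (Suc n) - x n) + c n * (2 * M + cs)"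
        using stepi[of n] by linarith
    next
      show "summable (\<lambda>n. c n * (2 * M + cs))" using sc by (rule summable_mult2)
    qed
    then have "summable (\<lambda>n. norm (x (Suc n) - x n))"
      using summable_mult[of _ "1/(2*\<rho>')"] \<rho>' by (simp add: summable_cmult_iff)
    then have sn: "summable (\<lambda>n. norm (x (Suc n) - x n))" .
    have "Cauchy x"
    proof (rule metric_CauchyI)
      fix e :: real assume e: "e > 0"
      obtain N where N: "\<And>n. n \<ge> N \<Longrightarrow> norm (\<Sum>i. norm (x (Suc (i + n)) - x (i + n))) < e/2"
        using suminf_exist_split[OF _ sn, of "e/2"] e by auto
      have near: "norm (x m - x N) < e/2" if "m \<ge> N" for m
      proof -
        have tri: "norm (x (Suc k) - x N) \<le> norm (x k - x N) + norm (x (Suc k) - x k)" for k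
          using norm_triangle_ineq[of "x k - x N" "x (Suc k) - x k"] by simp
        have "norm (x (N + (m - N)) - x N) \<le> norm (x N - x N) + (\<Sum>j. norm (x (Suc (j + N)) - x (j + N)))"
          using qfejer_tail[where c="\<lambda>k. norm (x (Suc k) - x k)" and a="\<lambda>k. norm (x k - x N)" and n=N and k="m - N", OF _ sn tri]
          by simp
        then show ?thesis using N[of N] that by simp
      qed
      have "dist (x m) (x n) < e" if "m \<ge> N" "n \<ge> N" for m n
        using near[OF that(1)] near[OF that(2)] norm_triangle_ineq4[of "x m - x N" "x n - x N"]
        by (simp add: dist_norm)
      then show "\<exists>M. \<forall>m\<ge>M. \<forall>n\<ge>M. dist (x m) (x n) < e" by blast
    qed
    then obtain p where xl: "x \<longlonglongrightarrow> p" using Cauchy_convergent_iff convergent_def by blast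
    then have "p = z" using weak_unique[OF wz strict_mono_id, of p] strong_weak[OF xl] by simp
    then show "\<exists>z\<in>S. x \<longlonglongrightarrow> z" using xl zS by blast
  qed
next
  define d where "d n = infdist (x n) S" for n
  have dstep: "d (Suc n) \<le> d n + c n" for n
  proof -
    have "d (Suc n) - c n \<le> dist (x n) z" if "z \<in> S" for z
      using infdist_le[OF that, of "x (Suc n)"] fej[OF that, of n] unfolding d_def dist_norm by simp
    then have "d (Suc n) - c n \<le> (INF z\<in>S. dist (x n) z)" using Sne by (intro cINF_greatest) auto
    then show ?thesis unfolding d_def infdist_notempty[OF Sne] by simp
  qed
  show "(\<exists>z\<in>S. x \<longlonglongrightarrow> z) \<longleftrightarrow> liminf (\<lambda>n. ereal (infdist (x n) S)) = 0"
  proof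
    assume "\<exists>z\<in>S. x \<longlonglongrightarrow> z"
    then obtain z where "z \<in> S" "x \<longlonglongrightarrow> z" by blast
    then have "(\<lambda>n. infdist (x n) S) \<longlonglongrightarrow> 0" using tendsto_infdist[of x z sequentially S] by simp
    then have "(\<lambda>n. ereal (infdist (x n) S)) \<longlonglongrightarrow> ereal 0" by (rule tendsto_ereal)
    then have "liminf (\<lambda>n. ereal (infdist (x n) S)) = ereal 0"
      by (rule lim_imp_Liminf[OF trivial_limit_sequentially])
    then show "liminf (\<lambda>n. ereal (infdist (x n) S)) = 0" by (simp add: zero_ereal_def)
  next
    assume li: "liminf (\<lambda>n. ereal (infdist (x n) S)) = 0"
    have "convergent d" using qfejer_conv[OF _ c0 sc dstep] infdist_nonneg unfolding d_def by blast
    then obtain L where dL: "d \<longlonglongrightarrow> L" by (auto simp: convergent_def)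
    then have "(\<lambda>n. ereal (d n)) \<longlonglongrightarrow> ereal L" by (rule tendsto_ereal)
    then have "liminf (\<lambda>n. ereal (d n)) = ereal L"
      by (rule lim_imp_Liminf[OF trivial_limit_sequentially])
    then have L0: "L = 0" using li unfolding d_def by (simp add: zero_ereal_def)
    have "Cauchy x"
    proof (rule metric_CauchyI)
      fix e :: real assume e: "e > 0"
      obtain N1 where N1: "\<And>n. n \<ge> N1 \<Longrightarrow> norm (d n - 0) < e/4"
        using dL L0 e unfolding LIMSEQ_iff by (metis zero_less_divide_iff zero_less_numeral)
      obtain N2 where N2: "\<And>n. n \<ge> N2 \<Longrightarrow> norm (\<Sum>i. c (i + n)) < e/4"
        using suminf_exist_split[OF _ sc, of "e/4"] e by auto
      define N where "N = max N1 N2"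
      have dN: "d N < e/4" using N1[of N] unfolding N_def by simp
      then have il: "(INF z\<in>S. dist (x N) z) < e/4" unfolding d_def infdist_notempty[OF Sne] .
      have bb: "bdd_below ((\<lambda>z. dist (x N) z) ` S)" by (rule bdd_belowI[where m=0]) auto
      have "\<exists>z\<in>S. dist (x N) z < e/4"
        using cInf_less_iff[OF _ bb, of "e/4"] Sne il by auto
      then obtain z where zS: "z \<in> S" and dz: "dist (x N) z < e/4" by blast
      have tl: "(\<Sum>i. c (i + N)) < e/4" using N2[of N] unfolding N_def by simp
      have near: "norm (x m - z) < e/2" if "m \<ge> N" for m
      proof -
        have "norm (x (N + (m - N)) - z) \<le> norm (x N - z) + (\<Sum>j. c (j + N))"
          by (rule qfejer_tail[OF c0 sc]) (rule fej[OF zS])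
        then show ?thesis using that dz tl by (simp add: dist_norm)
      qed
      have "dist (x m) (x n) < e" if "m \<ge> N" "n \<ge> N" for m n
        using near[OF that(1)] near[OF that(2)] norm_triangle_ineq4[of "x m - z" "x n - z"]
        by (simp add: dist_norm)
      then show "\<exists>M. \<forall>m\<ge>M. \<forall>n\<ge>M. dist (x m) (x n) < e" by blast
    qed
    then obtain p where xp: "x \<longlonglongrightarrow> p" using Cauchy_convergent_iff convergent_def by blast
    then have "d \<longlonglongrightarrow> infdist p S" unfolding d_def by (rule tendsto_infdist)
    then have "infdist p S = 0" using dL L0 LIMSEQ_unique by blast
    then have "p \<in> S" using in_closed_iff_infdist_zero[OF Scl Sne] by blast
    then show "\<exists>z\<in>S. x \<longlonglongrightarrow> z" using xp by blast
  qed
qed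
qed

lemma averaged_ineq:
  fixes T :: "'a::real_inner \<Rightarrow> 'a"
  assumes "averaged \<alpha> T"
  shows "(norm (T x - T y))\<^sup>2 \<le> (norm (x - y))\<^sup>2 - (1 - \<alpha>) / \<alpha> * (norm ((x - T x) - (y - T y)))\<^sup>2"
proof -
  obtain R where R: "nonexpansive R" and T: "T = (\<lambda>x. (1 - \<alpha>) *\<^sub>R x + \<alpha> *\<^sub>R R x)"
    and a0: "0 < \<alpha>" and a1: "\<alpha> < 1" using assms unfolding averaged_def by blast
  define u where "u = x - y"
  define v where "v = R x - R y"
  have vu: "norm v \<le> norm u" using R unfolding nonexpansive_def u_def v_def by blast
  have e1: "T x - T y = (1 - \<alpha>) *\<^sub>R u + \<alpha> *\<^sub>R v" unfolding T u_def v_def by (simp add: algebra_simps)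
  have e2: "(x - T x) - (y - T y) = \<alpha> *\<^sub>R (u - v)" unfolding T u_def v_def by (simp add: algebra_simps)
  define U where "U = (norm u)\<^sup>2"
  define V where "V = (norm v)\<^sup>2"
  define I where "I = inner u v"
  have l: "(norm (T x - T y))\<^sup>2 = (1-\<alpha>)\<^sup>2 * U + 2 * ((1-\<alpha>) * \<alpha>) * I + \<alpha>\<^sup>2 * V"
    unfolding e1 nsq_add nsq_scale U_def V_def I_def by simp
  have r: "(norm ((x - T x) - (y - T y)))\<^sup>2 = \<alpha>\<^sup>2 * (U - 2 * I + V)"
    unfolding e2 nsq_scale nsq_diff U_def V_def I_def ..
  have VU: "V \<le> U" unfolding U_def V_def using vu by (simp add: power_mono)
  have "(norm (x - y))\<^sup>2 - (1 - \<alpha>) / \<alpha> * (norm ((x - T x) - (y - T y)))\<^sup>2 - (norm (T x - T y))\<^sup>2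
        = \<alpha> * (U - V)"
    unfolding l r u_def[symmetric] U_def[symmetric] using a0
    by (simp add: field_simps power2_eq_square)
  moreover have "0 \<le> \<alpha> * (U - V)" using a0 VU by simp
  ultimately show ?thesis by linarith
qed

lemma comp_range_step: "i \<le> j \<Longrightarrow> comp_range T n i j = T i n \<circ> comp_range T n (Suc i) j"
  unfolding comp_range_def by (simp add: upt_conv_Cons del: upt_Suc)

lemma comp_range_end: "comp_range T n (Suc j) j = id"
  unfolding comp_range_def by simp

lemma pert_comp_step: "i \<le> j \<Longrightarrow> pert_comp T e n i j y = T i n (pert_comp T e n (Suc i) j y) + e i n"
  unfolding pert_comp_def by (simp add: upt_conv_Cons del: upt_Suc)

lemma pert_comp_end: "pert_comp T e n (Suc j) j = id"
  unfolding pert_comp_def by simp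

lemma comp_nonexp:
  assumes "\<And>k. k \<in> {i..m} \<Longrightarrow> nonexpansive (T k n)" and "i \<le> Suc m"
  shows "nonexpansive (comp_range T n i m)"
  using assms
proof (induction "Suc m - i" arbitrary: i)
  case 0 then have "i = Suc m" by simp
  then show ?case by (simp add: comp_range_end nonexpansive_def)
next
  case (Suc d)
  then have im: "i \<le> m" by simp
  have "nonexpansive (comp_range T n (Suc i) m)" using Suc by simp
  moreover have "nonexpansive (T i n)" using Suc.prems im by simp
  ultimately show ?case unfolding comp_range_step[OF im] nonexpansive_def
    by (metis comp_apply order_trans)
qed

lemma pert_err:
  assumes "\<And>k. k \<in> {i..m} \<Longrightarrow> nonexpansive (T k n)" and "i \<le> Suc m"
  shows "norm (pert_comp T e n i m y - comp_range T n i m y) \<le> (\<Sum>k=i..m. norm (e k n))"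
  using assms
proof (induction "Suc m - i" arbitrary: i)
  case 0 then have "i = Suc m" by simp
  then show ?case by (simp add: pert_comp_end comp_range_end)
next
  case (Suc d)
  then have im: "i \<le> m" by simp
  have IH: "norm (pert_comp T e n (Suc i) m y - comp_range T n (Suc i) m y) \<le> (\<Sum>k=Suc i..m. norm (e k n))"
    using Suc by simp
  have ne: "nonexpansive (T i n)" using Suc.prems im by simp
  have "norm (pert_comp T e n i m y - comp_range T n i m y)
      = norm ((T i n (pert_comp T e n (Suc i) m y) - T i n (comp_range T n (Suc i) m y)) + e i n)"
    unfolding pert_comp_step[OF im] comp_range_step[OF im] by (simp add: algebra_simps)
  also have "\<dots> \<le> norm (T i n (pert_comp T e n (Suc i) m y) - T i n (comp_range T n (Suc i) m y)) + norm (e i n)"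
    by (rule norm_triangle_ineq)
  also have "\<dots> \<le> norm (pert_comp T e n (Suc i) m y - comp_range T n (Suc i) m y) + norm (e i n)"
    using ne unfolding nonexpansive_def by simp
  also have "\<dots> \<le> (\<Sum>k=i..m. norm (e k n))"
    using IH im by (simp add: sum.atLeast_Suc_atMost)
  finally show ?case .
qed

definition dterm :: "(nat \<Rightarrow> nat \<Rightarrow> 'a \<Rightarrow> 'a::real_vector) \<Rightarrow> nat \<Rightarrow> nat \<Rightarrow> nat \<Rightarrow> 'a \<Rightarrow> 'a \<Rightarrow> 'a" where
  "dterm T n m k x y = (comp_range T n (Suc k) m x - T k n (comp_range T n (Suc k) m x))
       - (comp_range T n (Suc k) m y - T k n (comp_range T n (Suc k) m y))"

lemma dterm_sum:
  assumes "i \<le> Suc m"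
  shows "(\<Sum>k=i..m. dterm T n m k x y) = (x - comp_range T n i m x) - (y - comp_range T n i m y)"
  using assms
proof (induction "Suc m - i" arbitrary: i)
  case 0 then have "i = Suc m" by simp
  then show ?case by (simp add: comp_range_end)
next
  case (Suc d)
  then have im: "i \<le> m" by simp
  have IH: "(\<Sum>k=Suc i..m. dterm T n m k x y) = (x - comp_range T n (Suc i) m x) - (y - comp_range T n (Suc i) m y)"
    using Suc by simp
  show ?case using IH im unfolding sum.atLeast_Suc_atMost[OF im] comp_range_step[OF im] dterm_def
    by (simp add: algebra_simps)
qed

lemma comp_ineq:
  fixes T :: "nat \<Rightarrow> nat \<Rightarrow> 'a::real_inner \<Rightarrow> 'a"
  assumes "\<And>k. k \<in> {i..m} \<Longrightarrow> averaged (\<alpha> k) (T k n)" and "i \<le> Suc m"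
  shows "(\<Sum>k=i..m. (1 - \<alpha> k) / \<alpha> k * (norm (dterm T n m k x y))\<^sup>2)
     \<le> (norm (x - y))\<^sup>2 - (norm (comp_range T n i m x - comp_range T n i m y))\<^sup>2"
  using assms
proof (induction "Suc m - i" arbitrary: i)
  case 0 then have "i = Suc m" by simp
  then show ?case by (simp add: comp_range_end)
next
  case (Suc d)
  then have im: "i \<le> m" by simp
  have IH: "(\<Sum>k=Suc i..m. (1 - \<alpha> k) / \<alpha> k * (norm (dterm T n m k x y))\<^sup>2)
     \<le> (norm (x - y))\<^sup>2 - (norm (comp_range T n (Suc i) m x - comp_range T n (Suc i) m y))\<^sup>2"
    using Suc by simp
  have av: "averaged (\<alpha> i) (T i n)" using Suc.prems im by simp
  have "(norm (comp_range T n i m x - comp_range T n i m y))\<^sup>2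
     \<le> (norm (comp_range T n (Suc i) m x - comp_range T n (Suc i) m y))\<^sup>2 - (1 - \<alpha> i) / \<alpha> i * (norm (dterm T n m i x y))\<^sup>2"
    unfolding comp_range_step[OF im] dterm_def comp_apply by (rule averaged_ineq[OF av])
  then show ?case using IH im unfolding sum.atLeast_Suc_atMost[OF im] by simp
qed

lemma cs_weighted:
  fixes d :: "nat \<Rightarrow> 'a::real_inner"
  assumes fin: "finite I" and kp: "\<And>k. k \<in> I \<Longrightarrow> 0 < \<kappa> k"
  shows "(norm (\<Sum>k\<in>I. d k))\<^sup>2 \<le> (\<Sum>k\<in>I. 1 / \<kappa> k) * (\<Sum>k\<in>I. \<kappa> k * (norm (d k))\<^sup>2)"
proof -
  have "norm (\<Sum>k\<in>I. d k) \<le> (\<Sum>k\<in>I. norm (d k))" by (rule norm_sum)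
  then have "(norm (\<Sum>k\<in>I. d k))\<^sup>2 \<le> (\<Sum>k\<in>I. norm (d k))\<^sup>2" by (intro power_mono) auto
  also have "(\<Sum>k\<in>I. norm (d k)) = (\<Sum>k\<in>I. (1 / sqrt (\<kappa> k)) * (sqrt (\<kappa> k) * norm (d k)))"
  proof (intro sum.cong refl)
    fix k assume "k \<in> I"
    then have "sqrt (\<kappa> k) > 0" using kp by simp
    then show "norm (d k) = 1 / sqrt (\<kappa> k) * (sqrt (\<kappa> k) * norm (d k))" by (simp add: field_simps)
  qed
  also have "(\<dots>)\<^sup>2 \<le> (\<Sum>k\<in>I. (1 / sqrt (\<kappa> k))\<^sup>2) * (\<Sum>k\<in>I. (sqrt (\<kappa> k) * norm (d k))\<^sup>2)"
    by (rule Cauchy_Schwarz_ineq_sum)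
  also have "\<dots> = (\<Sum>k\<in>I. 1 / \<kappa> k) * (\<Sum>k\<in>I. \<kappa> k * (norm (d k))\<^sup>2)"
    using kp by (intro arg_cong2[where f="(*)"] sum.cong) (auto simp: power_divide power_mult_distrib less_imp_le)
  finally show ?thesis .
qed

lemma relax_ab:
  fixes a b :: "'a::real_inner"
  shows "(norm ((1 - lam) *\<^sub>R a + lam *\<^sub>R b))\<^sup>2
    = (1 - lam) * (norm a)\<^sup>2 + lam * (norm b)\<^sup>2 - lam * (1 - lam) * (norm (b - a))\<^sup>2"
  unfolding nsq_add nsq_scale nsq_diff
  by (simp add: algebra_simps power2_eq_square inner_commute)

lemma relax_identity:
  fixes x q z :: "'a::real_inner"
  shows "(norm (x + lam *\<^sub>R (q - x) - z))\<^sup>2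
    = (1 - lam) * (norm (x - z))\<^sup>2 + lam * (norm (q - z))\<^sup>2 - lam * (1 - lam) * (norm (q - x))\<^sup>2"
proof -
  have e1: "x + lam *\<^sub>R (q - x) - z = (1 - lam) *\<^sub>R (x - z) + lam *\<^sub>R (q - z)"
    by (simp add: algebra_simps)
  have e2: "q - x = (q - z) - (x - z)" by simp
  show ?thesis unfolding e1 by (subst e2) (rule relax_ab)
qed

lemma key_num:
  fixes A B D Sg K lam \<epsilon> :: real
  assumes h1: "Sg \<le> A - B" and h2: "D \<le> K * Sg" and K0: "0 < K" and l0: "0 < lam"
    and l1: "lam \<le> 1 + (1 - \<epsilon>) / K" and e0: "0 < \<epsilon>" and e1: "\<epsilon> < 1" and D0: "0 \<le> D"
  shows "(1 - lam) * A + lam * B - lam * (1 - lam) * D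
      \<le> A - (1/2) * lam * (1 + 1/K - lam) * D - (\<epsilon>/2) * lam * Sg"
proof -
  have sd: "D / K \<le> Sg" using h2 K0 by (simp add: divide_le_eq mult.commute)
  have "(1 - \<epsilon>/2) * (D / K) \<le> (1 - \<epsilon>/2) * Sg" using sd e1 by (intro mult_left_mono) auto
  moreover have "(1 - \<epsilon>/2) * (D / K) + (1/2) * (1 - lam - 1/K) * D = (D/2) * ((1 - \<epsilon>)/K + 1 - lam)"
    using K0 by (simp add: field_simps)
  moreover have "0 \<le> (D/2) * ((1 - \<epsilon>)/K + 1 - lam)" using D0 l1 by simp
  ultimately have h: "0 \<le> (1 - \<epsilon>/2) * Sg + (1/2) * (1 - lam - 1/K) * D" by linarith
  have "A - (1/2) * lam * (1 + 1/K - lam) * D - (\<epsilon>/2) * lam * Sg - ((1 - lam) * A + lam * B - lam * (1 - lam) * D)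
      = lam * ((A - B) - (\<epsilon>/2) * Sg + (1/2) * (1 - lam - 1/K) * D)"
    using K0 by (simp add: field_simps)
  also have "\<dots> \<ge> lam * ((1 - \<epsilon>/2) * Sg + (1/2) * (1 - lam - 1/K) * D)"
    using h1 l0 by (intro mult_left_mono) (auto simp: algebra_simps)
  moreover have "lam * ((1 - \<epsilon>/2) * Sg + (1/2) * (1 - lam - 1/K) * D) \<ge> 0" using l0 h by simp
  ultimately show ?thesis by linarith
qed

theorem theorem3p5:
  fixes \<epsilon> :: real and m :: nat and x0 :: "'a::{real_inner, complete_space}"
    and \<alpha> :: "nat \<Rightarrow> nat \<Rightarrow> real"
    and T :: "nat \<Rightarrow> nat \<Rightarrow> 'a \<Rightarrow> 'a"
    and e :: "nat \<Rightarrow> nat \<Rightarrow> 'a"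
    and lam :: "nat \<Rightarrow> real"
    and x :: "nat \<Rightarrow> 'a"
    and S :: "'a set"
  assumes eps: "0 < \<epsilon>" "\<epsilon> < 1/2"
    and m2: "m \<ge> 2"
    and alpha: "\<And>i n. i \<in> {1..m} \<Longrightarrow> 0 < \<alpha> i n \<and> \<alpha> i n < 1"
    and avg: "\<And>i n. i \<in> {1..m} \<Longrightarrow> averaged (\<alpha> i n) (T i n)"
    and lam: "\<And>n. 0 < lam n \<and>
        lam n \<le> (1 - \<epsilon>) * (1 + \<epsilon> * phi m (\<lambda>i. \<alpha> i n)) / phi m (\<lambda>i. \<alpha> i n)"
    and x_0: "x 0 = x0"
    and iter: "\<And>n. x (Suc n) = x n + lam n *\<^sub>R (pert_comp T e n 1 m (x n) - x n)"
    and S_def: "S = (\<Inter>n. Fix (comp_range T n 1 m))"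
    and S_ne: "S \<noteq> {}"
    and err: "\<And>i. i \<in> {1..m} \<Longrightarrow> summable (\<lambda>n. lam n * norm (e i n))"
  shows
    "(summable (\<lambda>n. lam n * (1 / phi m (\<lambda>i. \<alpha> i n) - lam n)
        * (norm (comp_range T n 1 m (x n) - x n))\<^sup>2))
   \<and> (\<forall>z\<in>S. \<forall>i\<in>{1..m}. summable (\<lambda>n. lam n * (1 - \<alpha> i n) / \<alpha> i n
        * (norm ((comp_range T n (Suc i) m (x n) - T i n (comp_range T n (Suc i) m (x n)))
               - (comp_range T n (Suc i) m z - T i n (comp_range T n (Suc i) m z))))\<^sup>2))
   \<and> ((\<exists>z\<in>S. weakly_conv x z) \<longleftrightarrow> (\<forall>z. weak_seq_cluster x z \<longrightarrow> z \<in> S))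
   \<and> ((\<exists>z\<in>S. weakly_conv x z) \<and> interior S \<noteq> {} \<longrightarrow> (\<exists>z\<in>S. x \<longlonglongrightarrow> z))
   \<and> ((\<exists>z\<in>S. x \<longlonglongrightarrow> z) \<longleftrightarrow> liminf (\<lambda>n. ereal (infdist (x n) S)) = 0)"
proof -
  have m1: "1 \<le> m" using m2 by simp
  have e1: "\<epsilon> < 1" using eps by simp
  define Q where "Q n = comp_range T n 1 m" for n
  define P where "P n = pert_comp T e n 1 m" for n
  define K where "K n = (\<Sum>i=1..m. \<alpha> i n / (1 - \<alpha> i n))" for n
  define \<kappa> where "\<kappa> i n = (1 - \<alpha> i n) / \<alpha> i n" for i n
  have Kpos: "0 < K n" for n
    unfolding K_def using m1 alpha by (intro sum_pos) auto
  have kpos: "0 < \<kappa> i n" if "i \<in> {1..m}" for i n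
    unfolding \<kappa>_def using alpha[OF that, of n] by simp
  have invphi: "1 / phi m (\<lambda>i. \<alpha> i n) = 1 + 1 / K n" for n
    unfolding phi_def K_def by simp
  have lamK: "lam n \<le> 1 + (1 - \<epsilon>) / K n" for n
  proof -
    define p where "p = phi m (\<lambda>i. \<alpha> i n)"
    have ip: "1 / p = 1 + 1 / K n" unfolding p_def by (rule invphi)
    have p0: "p \<noteq> 0" using ip Kpos[of n]
      by (metis add_pos_pos divide_eq_0_iff less_numeral_extra(1) less_numeral_extra(3) zero_less_divide_1_iff)
    have "lam n \<le> (1 - \<epsilon>) * (1 + \<epsilon> * p) / p" using lam[of n] unfolding p_def by simp
    also have "\<dots> = (1 - \<epsilon>) * (1 / p + \<epsilon>)" using p0 by (simp add: field_simps)
    also have "\<dots> = (1 - \<epsilon>) * (1 + \<epsilon>) + (1 - \<epsilon>) / K n" unfolding ip by (simp add: algebra_simps)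
    also have "\<dots> \<le> 1 + (1 - \<epsilon>) / K n" by (simp add: algebra_simps)
    finally show ?thesis .
  qed
  have coef: "\<epsilon> / K n \<le> 1 + 1 / K n - lam n" for n
  proof -
    have "1 + 1 / K n - lam n \<ge> 1 / K n - (1 - \<epsilon>) / K n" using lamK[of n] by simp
    also have "1 / K n - (1 - \<epsilon>) / K n = \<epsilon> / K n" by (simp add: diff_divide_distrib[symmetric])
    finally show ?thesis .
  qed
  have coef0: "0 \<le> 1 + 1 / K n - lam n" for n
    using coef[of n] eps Kpos[of n] by (smt (verit) divide_pos_pos)
  have ne: "nonexpansive (T k n)" if "k \<in> {1..m}" for k n
    using avg[OF that] unfolding averaged_def by blast
  have Qne: "nonexpansive (Q n)" for n
    unfolding Q_def using ne m1 by (intro comp_nonexp) auto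
  have Scl: "closed S"
  proof -
    have "closed (Fix (Q n))" for n
    proof -
      have "continuous_on UNIV (Q n)"
        using Qne[of n] unfolding nonexpansive_def
        by (intro lipschitz_on_continuous_on[where L=1] lipschitz_onI) (auto simp: dist_norm)
      then show ?thesis unfolding Fix_def by (intro closed_Collect_eq) (auto intro: continuous_intros)
    qed
    then show ?thesis unfolding S_def Q_def by auto
  qed
  have QS: "Q n z = z" if "z \<in> S" for z n using that unfolding S_def Q_def Fix_def by auto
  define c where "c n = (\<Sum>i=1..m. lam n * norm (e i n))" for n
  have c0: "0 \<le> c n" for n unfolding c_def using lam[of n] by (intro sum_nonneg mult_nonneg_nonneg) auto
  have sc: "summable c" unfolding c_def using err by (intro summable_sum) auto
  have cs0: "0 \<le> suminf c" using suminf_nonneg[OF sc c0] .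
  have cle: "c n \<le> suminf c" for n using sum_le_suminf[OF sc, of "{n}"] c0 by auto
  define y where "y n = x n + lam n *\<^sub>R (Q n (x n) - x n)" for n
  have xy: "x (Suc n) = y n + lam n *\<^sub>R (P n (x n) - Q n (x n))" for n
    unfolding iter y_def P_def Q_def by (simp add: algebra_simps)
  have fej1: "norm (x (Suc n) - z) \<le> norm (y n - z) + c n" for z n
  proof -
    have "norm (x (Suc n) - z) = norm ((y n - z) + lam n *\<^sub>R (P n (x n) - Q n (x n)))"
      unfolding xy by (simp add: algebra_simps)
    also have "\<dots> \<le> norm (y n - z) + lam n * norm (P n (x n) - Q n (x n))"
      using norm_triangle_ineq lam[of n] by (smt (verit) norm_scaleR)
    also have "lam n * norm (P n (x n) - Q n (x n)) \<le> lam n * (\<Sum>k=1..m. norm (e k n))"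
      unfolding P_def Q_def using lam[of n] ne m1
      by (intro mult_left_mono pert_err) auto
    also have "lam n * (\<Sum>k=1..m. norm (e k n)) = c n" unfolding c_def by (simp add: sum_distrib_left)
    finally show ?thesis by simp
  qed
  define D where "D n = (norm (Q n (x n) - x n))\<^sup>2" for n
  define Sig where "Sig z n = (\<Sum>k=1..m. \<kappa> k n * (norm (dterm T n m k (x n) z))\<^sup>2)" for z n
  have Sig0: "0 \<le> Sig z n" for z n unfolding Sig_def using kpos by (intro sum_nonneg mult_nonneg_nonneg) (auto intro: less_imp_le)
  have D0: "0 \<le> D n" for n unfolding D_def by simp
  have sig_ineq: "Sig z n \<le> (norm (x n - z))\<^sup>2 - (norm (Q n (x n) - z))\<^sup>2" if "z \<in> S" for z n
  proof -
    have "Sig z n \<le> (norm (x n - z))\<^sup>2 - (norm (Q n (x n) - Q n z))\<^sup>2"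
      unfolding Sig_def \<kappa>_def Q_def using avg m1 by (intro comp_ineq) auto
    then show ?thesis using QS[OF that] by simp
  qed
  have D_ineq: "D n \<le> K n * Sig z n" if "z \<in> S" for z n
  proof -
    have "(\<Sum>k=1..m. dterm T n m k (x n) z) = (x n - Q n (x n)) - (z - Q n z)"
      unfolding Q_def using m1 by (intro dterm_sum) auto
    then have ds: "(\<Sum>k=1..m. dterm T n m k (x n) z) = x n - Q n (x n)" using QS[OF that] by simp
    have "(norm (\<Sum>k=1..m. dterm T n m k (x n) z))\<^sup>2 \<le> (\<Sum>k=1..m. 1 / \<kappa> k n) * Sig z n"
      unfolding Sig_def using kpos by (intro cs_weighted) auto
    moreover have "(\<Sum>k=1..m. 1 / \<kappa> k n) = K n" unfolding K_def \<kappa>_def by simp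
    moreover have "D n = (norm (\<Sum>k=1..m. dterm T n m k (x n) z))\<^sup>2"
      unfolding ds D_def by (simp add: norm_minus_commute)
    ultimately show ?thesis by simp
  qed
  define \<eta> where "\<eta> z n = (1/2) * lam n * (1 + 1/K n - lam n) * D n + (\<epsilon>/2) * lam n * Sig z n" for z n
  have \<eta>0: "0 \<le> \<eta> z n" for z n
    unfolding \<eta>_def using lam[of n] coef0[of n] D0[of n] Sig0[of z n] eps by simp
  have ystep: "(norm (y n - z))\<^sup>2 \<le> (norm (x n - z))\<^sup>2 - \<eta> z n" if "z \<in> S" for z n
  proof -
    have "(norm (y n - z))\<^sup>2 = (1 - lam n) * (norm (x n - z))\<^sup>2 + lam n * (norm (Q n (x n) - z))\<^sup>2
        - lam n * (1 - lam n) * D n"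
      unfolding y_def D_def by (rule relax_identity)
    also have "\<dots> \<le> (norm (x n - z))\<^sup>2 - (1/2) * lam n * (1 + 1/K n - lam n) * D n - (\<epsilon>/2) * lam n * Sig z n"
      using sig_ineq[OF that] D_ineq[OF that] Kpos lam lamK eps e1 D0 by (intro key_num) auto
    finally show ?thesis unfolding \<eta>_def by simp
  qed
  have yx: "norm (y n - z) \<le> norm (x n - z)" if "z \<in> S" for z n
  proof (rule power2_le_imp_le)
    show "(norm (y n - z))\<^sup>2 \<le> (norm (x n - z))\<^sup>2" using ystep[OF that, of n] \<eta>0[of z n] by linarith
  qed simp
  have fej: "norm (x (Suc n) - z) \<le> norm (x n - z) + c n" if "z \<in> S" for z n
    using fej1[of n z] yx[OF that, of n] by linarith
  have \<eta>sum: "summable (\<eta> z)" if zS: "z \<in> S" for z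
  proof -
    define Bz where "Bz = norm (x 0 - z) + suminf c"
    have xB: "norm (x n - z) \<le> Bz" for n
      unfolding Bz_def using qfejer_bound[where c=c and a="\<lambda>n. norm (x n - z)", OF c0 sc fej[OF zS]] .
    have Bz0: "0 \<le> Bz" unfolding Bz_def using cs0 by simp
    show ?thesis
    proof (rule telescope_summable[where a="\<lambda>n. (norm (x n - z))\<^sup>2" and c="\<lambda>n. c n * (2 * Bz + suminf c)"])
      fix n
      show "0 \<le> (norm (x n - z))\<^sup>2" by simp
      show "0 \<le> \<eta> z n" by (rule \<eta>0)
      show "0 \<le> c n * (2 * Bz + suminf c)" using c0[of n] Bz0 cs0 by simp
      have "(norm (x (Suc n) - z))\<^sup>2 \<le> (norm (y n - z) + c n)\<^sup>2"
        using fej1[of n z] by (intro power_mono) auto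
      also have "\<dots> = (norm (y n - z))\<^sup>2 + c n * (2 * norm (y n - z) + c n)"
        by (simp add: power2_eq_square algebra_simps)
      also have "\<dots> \<le> (norm (y n - z))\<^sup>2 + c n * (2 * Bz + suminf c)"
        using yx[OF zS, of n] xB[of n] cle[of n] c0[of n]
        by (intro add_left_mono mult_left_mono) auto
      also have "\<dots> \<le> (norm (x n - z))\<^sup>2 - \<eta> z n + c n * (2 * Bz + suminf c)"
        using ystep[OF zS, of n] by simp
      finally show "(norm (x (Suc n) - z))\<^sup>2 \<le> (norm (x n - z))\<^sup>2 - \<eta> z n + c n * (2 * Bz + suminf c)" .
    next
      show "summable (\<lambda>n. c n * (2 * Bz + suminf c))" using sc by (rule summable_mult2)
    qed
  qed
  obtain z0 where z0: "z0 \<in> S" using S_ne by blast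
  have part1: "summable (\<lambda>n. lam n * (1 / phi m (\<lambda>i. \<alpha> i n) - lam n)
        * (norm (comp_range T n 1 m (x n) - x n))\<^sup>2)"
  proof (rule summable_comparison_test'[where N=0])
    show "summable (\<lambda>n. 2 * \<eta> z0 n)" using \<eta>sum[OF z0] by (rule summable_mult)
    fix n
    have eq: "lam n * (1 / phi m (\<lambda>i. \<alpha> i n) - lam n) * (norm (comp_range T n 1 m (x n) - x n))\<^sup>2
        = lam n * (1 + 1 / K n - lam n) * D n" unfolding invphi D_def Q_def ..
    have nn: "0 \<le> lam n * (1 + 1 / K n - lam n) * D n" using lam[of n] coef0[of n] D0[of n] by simp
    have "lam n * (1 + 1 / K n - lam n) * D n \<le> 2 * \<eta> z0 n"
      unfolding \<eta>_def using Sig0[of z0 n] lam[of n] eps by simp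
    then show "norm (lam n * (1 / phi m (\<lambda>i. \<alpha> i n) - lam n) * (norm (comp_range T n 1 m (x n) - x n))\<^sup>2) \<le> 2 * \<eta> z0 n"
      unfolding eq using nn by simp
  qed
  have part2: "\<forall>z\<in>S. \<forall>i\<in>{1..m}. summable (\<lambda>n. lam n * (1 - \<alpha> i n) / \<alpha> i n
        * (norm ((comp_range T n (Suc i) m (x n) - T i n (comp_range T n (Suc i) m (x n)))
               - (comp_range T n (Suc i) m z - T i n (comp_range T n (Suc i) m z))))\<^sup>2)"
  proof (intro ballI)
    fix z i assume zS: "z \<in> S" and i: "i \<in> {1..m}"
    show "summable (\<lambda>n. lam n * (1 - \<alpha> i n) / \<alpha> i n
        * (norm ((comp_range T n (Suc i) m (x n) - T i n (comp_range T n (Suc i) m (x n)))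
               - (comp_range T n (Suc i) m z - T i n (comp_range T n (Suc i) m z))))\<^sup>2)"
    proof (rule summable_comparison_test'[where N=0])
      show "summable (\<lambda>n. (2 / \<epsilon>) * \<eta> z n)" using \<eta>sum[OF zS] by (rule summable_mult)
      fix n
      have eq: "lam n * (1 - \<alpha> i n) / \<alpha> i n
        * (norm ((comp_range T n (Suc i) m (x n) - T i n (comp_range T n (Suc i) m (x n)))
               - (comp_range T n (Suc i) m z - T i n (comp_range T n (Suc i) m z))))\<^sup>2
          = lam n * (\<kappa> i n * (norm (dterm T n m i (x n) z))\<^sup>2)"
        unfolding dterm_def \<kappa>_def by simp
      have t0: "0 \<le> \<kappa> i n * (norm (dterm T n m i (x n) z))\<^sup>2" using kpos[OF i, of n] by simp
      have "\<kappa> i n * (norm (dterm T n m i (x n) z))\<^sup>2 \<le> Sig z n"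
        unfolding Sig_def using i kpos by (intro member_le_sum mult_nonneg_nonneg) (auto intro: less_imp_le)
      then have "lam n * (\<kappa> i n * (norm (dterm T n m i (x n) z))\<^sup>2) \<le> lam n * Sig z n"
        using lam[of n] by (intro mult_left_mono) auto
      also have "\<dots> \<le> (2 / \<epsilon>) * \<eta> z n"
      proof -
        have "(2 / \<epsilon>) * \<eta> z n = (1 / \<epsilon>) * lam n * (1 + 1/K n - lam n) * D n + lam n * Sig z n"
          unfolding \<eta>_def using eps by (simp add: field_simps)
        moreover have "0 \<le> (1 / \<epsilon>) * lam n * (1 + 1/K n - lam n) * D n"
          using eps lam[of n] coef0[of n] D0[of n] by simp
        ultimately show ?thesis by linarith
      qed
      finally have le: "lam n * (\<kappa> i n * (norm (dterm T n m i (x n) z))\<^sup>2) \<le> (2 / \<epsilon>) * \<eta> z n" .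
      have nn: "0 \<le> lam n * (\<kappa> i n * (norm (dterm T n m i (x n) z))\<^sup>2)" using lam[of n] t0 by simp
      show "norm (lam n * (1 - \<alpha> i n) / \<alpha> i n
        * (norm ((comp_range T n (Suc i) m (x n) - T i n (comp_range T n (Suc i) m (x n)))
               - (comp_range T n (Suc i) m z - T i n (comp_range T n (Suc i) m z))))\<^sup>2) \<le> (2 / \<epsilon>) * \<eta> z n"
        unfolding eq using le nn by simp
    qed
  qed
  have part345: "((\<exists>z\<in>S. weakly_conv x z) \<longleftrightarrow> (\<forall>z. weak_seq_cluster x z \<longrightarrow> z \<in> S))
   \<and> ((\<exists>z\<in>S. weakly_conv x z) \<and> interior S \<noteq> {} \<longrightarrow> (\<exists>z\<in>S. x \<longlonglongrightarrow> z))
   \<and> ((\<exists>z\<in>S. x \<longlonglongrightarrow> z) \<longleftrightarrow> liminf (\<lambda>n. ereal (infdist (x n) S)) = 0)"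
    by (rule fejer_conclusions[OF c0 sc fej S_ne Scl])
  show ?thesis using part1 part2 part345 by blast
qed

end
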